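(* Assume RH and let $T$ be large. For $0<k\le 1/2$, $$\sum_{0<\gamma\le T}\zeta'(\rho)\mathcal{N}(\rho,k-1)\mathcal{N}(\overline{\rho},k) \ll_k \Big(\sum_{0<\gamma\le T}|\zeta'(\rho)|^{2k}\Big)^{1/2}\Big(\sum_{0<\gamma\le T}|\zeta'(\rho)|^2|\mathcal{N}(\rho,k-1)|^2\Big)^{(1-k)/2}\Big(\sum_{0<\gamma\le T}\prod_{i=1}^{\mathcal{J}}\big(|\mathcal{N}_i(\rho,k)|^2+|\mathcal{Q}_i(\rho,k)|^{2r_k}\big)\Big)^{k/2}.$$ For $k>1/2$, $$\sum_{0<\gamma\le T}\zeta'(\rho)\mathcal{N}(\rho,k-1)\mathcal{N}(\overline{\rho},k) \ll_k \Big(\sum_{0<\gamma\le T}|\zeta'(\rho)|^{2k}\Big)^{\frac{1}{2k}}\Big(\sum_{0<\gamma\le T}\prod_{j=1}^{\mathcal{J}}\big(|\mathcal{N}_j(\rho,k)|^2+|\mathcal{Q}_j(\rho,k)|^{2r_k}\big)\Big)^{\frac{2k-1}{2k}}.$$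
   Context: Under RH every nontrivial zero of $\zeta$ is written $\rho=\tfrac12+i\gamma$, $\gamma\in\mathbb{R}$; sums over $0<\gamma\le T$ run over such zeros with multiplicity. Fix real $k>0$, a large number $M$ depending only on $k$, and a large number $T$. Set $\alpha_0=0$, $\alpha_j = 20^{j-1}/(\log\log T)^2$ for $j\ge1$, and $\mathcal{J}=1+\max\{j:\alpha_j\le 10^{-M}\}$. Let $I_j=(T^{\alpha_{j-1}},T^{\alpha_j}]$. Put $E_\ell(x)=\sum_{i=0}^{\lceil \ell\rceil} x^i/i!$. For $1\le j\le \mathcal{J}$, real $\alpha$ and complex $s$ define $\mathcal{P}_j(s)=\sum_{p\in I_j}p^{-s}$ ($p$ prime), $\mathcal{N}_j(s,\alpha)=E_{e^2k\alpha_j^{-3/4}}(\alpha\mathcal{P}_j(s))$, $\mathcal{N}(s,\alpha)=\prod_{j=1}^{\mathcal{J}}\mathcal{N}_j(s,\alpha)$, and $\mathcal{Q}_j(s,k)=\big(64\max(2,k+3/2)\mathcal{P}_j(s)/\lceil e^2k\alpha_j^{-3/4}\rceil\big)^{\lceil e^2k\alpha_j^{-3/4}\rceil}$. Set $r_k=2+\lceil 1/k\rceil$ if $0<k\le1/2$ and $r_k=1+\lceil 2k/(2k-1)\rceil$ if $k>1/2$. *)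

theory Defs
  imports "HOL-Complex_Analysis.Complex_Analysis" "HOL-Computational_Algebra.Primes"
begin

text \<open>Riemann zeta function: the unique function holomorphic on the complex plane minus 1
  that equals the Dirichlet series sum of n to the power -s for Re s > 1
  (value at the pole s = 1 fixed to 0 by convention, to make the function unique).\<close>
definition zeta :: "complex \<Rightarrow> complex" where
  "zeta = (THE f. f holomorphic_on (- {1}) \<and> f 1 = 0 \<and>
       (\<forall>s. 1 < Re s \<longrightarrow> (\<lambda>n. 1 / (of_nat (Suc n)) powr s) sums f s))"

definition RH :: bool where
  "RH \<longleftrightarrow> (\<forall>s. zeta s = 0 \<and> 0 < Re s \<and> Re s < 1 \<longrightarrow> Re s = 1/2)"

definition zero_sum :: "real \<Rightarrow> (complex \<Rightarrow> 'a::semiring_1) \<Rightarrow> 'a" where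
  "zero_sum T f = (\<Sum>\<rho>\<in>{\<rho>. zeta \<rho> = 0 \<and> 0 < Re \<rho> \<and> Re \<rho> < 1 \<and> 0 < Im \<rho> \<and> Im \<rho> \<le> T}.
                     of_nat (nat (zorder zeta \<rho>)) * f \<rho>)"

definition alpha :: "real \<Rightarrow> nat \<Rightarrow> real" where
  "alpha T j = (if j = 0 then 0 else 20 ^ (j - 1) / (ln (ln T))^2)"

definition JJ :: "real \<Rightarrow> real \<Rightarrow> nat" where
  "JJ T M = 1 + Max {j. alpha T j \<le> 10 powr (-M)}"

definition PP :: "real \<Rightarrow> nat \<Rightarrow> complex \<Rightarrow> complex" where
  "PP T j s = (\<Sum>p\<in>{p::nat. prime p \<and> T powr alpha T (j - 1) < real p \<and> real p \<le> T powr alpha T j}.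
                 (of_nat p) powr (- s))"

definition EE :: "real \<Rightarrow> complex \<Rightarrow> complex" where
  "EE l x = (\<Sum>i = 0..nat \<lceil>l\<rceil>. x ^ i / fact i)"

definition ell :: "real \<Rightarrow> real \<Rightarrow> nat \<Rightarrow> real" where
  "ell k T j = exp 2 * k * alpha T j powr (-3/4)"

definition NNj :: "real \<Rightarrow> real \<Rightarrow> nat \<Rightarrow> complex \<Rightarrow> real \<Rightarrow> complex" where
  "NNj T k j s a = EE (ell k T j) (of_real a * PP T j s)"

definition NN :: "real \<Rightarrow> real \<Rightarrow> real \<Rightarrow> complex \<Rightarrow> real \<Rightarrow> complex" where
  "NN T M k s a = (\<Prod>j = 1..JJ T M. NNj T k j s a)"

definition QQ :: "real \<Rightarrow> real \<Rightarrow> nat \<Rightarrow> complex \<Rightarrow> complex" where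
  "QQ T k j s = (of_real (64 * max 2 (k + 3/2)) * PP T j s / of_int \<lceil>ell k T j\<rceil>)
                  ^ nat \<lceil>ell k T j\<rceil>"

definition rk :: "real \<Rightarrow> nat" where
  "rk k = (if k \<le> 1/2 then 2 + nat \<lceil>1 / k\<rceil> else 1 + nat \<lceil>2 * k / (2 * k - 1)\<rceil>)"

end

theory Submission
  imports Defs
begin


lemma holder_sum:
  fixes w f g :: "'a \<Rightarrow> real"
  assumes fin: "finite I" and w: "\<And>i. i \<in> I \<Longrightarrow> w i \<ge> 0"
    and f: "\<And>i. i \<in> I \<Longrightarrow> f i \<ge> 0" and g: "\<And>i. i \<in> I \<Longrightarrow> g i \<ge> 0"
    and p: "p > 1" and q: "q > 1" and pq: "1/p + 1/q = 1"
  shows "(\<Sum>i\<in>I. w i * (f i * g i)) \<le>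
     (\<Sum>i\<in>I. w i * f i powr p) powr (1/p) * (\<Sum>i\<in>I. w i * g i powr q) powr (1/q)"
proof -
  define X where "X = (\<Sum>i\<in>I. w i * f i powr p)"
  define Y where "Y = (\<Sum>i\<in>I. w i * g i powr q)"
  have X0: "X \<ge> 0" unfolding X_def using w by (intro sum_nonneg) auto
  have Y0: "Y \<ge> 0" unfolding Y_def using w by (intro sum_nonneg) auto
  show ?thesis
  proof (cases "X = 0 \<or> Y = 0")
    case True
    then have "\<forall>i\<in>I. w i * f i = 0 \<or> w i * g i = 0"
    proof
      assume "X = 0"
      then have "\<forall>i\<in>I. w i * f i powr p = 0" unfolding X_def
        using sum_nonneg_eq_0_iff[OF fin] w by (simp add: sum_nonneg_eq_0_iff[OF fin])
      then show ?thesis using p by auto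
    next
      assume "Y = 0"
      then have "\<forall>i\<in>I. w i * g i powr q = 0" unfolding Y_def
        using w by (simp add: sum_nonneg_eq_0_iff[OF fin])
      then show ?thesis using q by auto
    qed
    then have "(\<Sum>i\<in>I. w i * (f i * g i)) = 0"
      by (intro sum.neutral) (auto simp: algebra_simps)
    then show ?thesis using X0 Y0 unfolding X_def[symmetric] Y_def[symmetric] by simp
  next
    case False
    with X0 Y0 have Xp: "X > 0" and Yp: "Y > 0" by auto
    define a where "a i = f i / X powr (1/p)" for i
    define b where "b i = g i / Y powr (1/q)" for i
    have "(\<Sum>i\<in>I. w i * (a i * b i)) \<le> (\<Sum>i\<in>I. w i * (a i powr p / p + b i powr q / q))"
      using w f g Xp Yp p q pq
      by (intro sum_mono mult_left_mono Youngs_inequality) (auto simp: a_def b_def)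
    also have "\<dots> = (1/p) * ((\<Sum>i\<in>I. w i * f i powr p) / X) + (1/q) * ((\<Sum>i\<in>I. w i * g i powr q) / Y)"
      using f g Xp Yp p q
      by (simp add: a_def b_def sum_divide_distrib sum_distrib_left sum.distrib
          powr_divide powr_powr algebra_simps)
    also have "\<dots> = 1" using Xp Yp pq unfolding X_def[symmetric] Y_def[symmetric] by simp
    finally have "(\<Sum>i\<in>I. w i * (a i * b i)) \<le> 1" .
    moreover have "(\<Sum>i\<in>I. w i * (a i * b i)) = (\<Sum>i\<in>I. w i * (f i * g i)) / (X powr (1/p) * Y powr (1/q))"
      by (simp add: a_def b_def sum_divide_distrib)
    ultimately show ?thesis using Xp Yp
      by (simp add: X_def[symmetric] Y_def[symmetric] divide_le_eq mult_ac)
  qed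
qed



lemma exp_sums_div: "(\<lambda>i. x^i / fact i) sums exp (x::'a::{real_normed_field,banach})"
proof -
  have "(\<lambda>i. x^i / fact i) = (\<lambda>i. x^i /\<^sub>R fact i)"
    by (simp add: scaleR_conv_of_real divide_inverse mult.commute)
  then show ?thesis using exp_converges by simp
qed

lemma partial_exp_le:
  assumes "(x::real) \<ge> 0"
  shows "(\<Sum>i=0..n. x^i / fact i) \<le> exp x"
proof -
  have "(\<Sum>i=0..n. x^i / fact i) \<le> (\<Sum>i. x^i / fact i)"
    using exp_sums_div[of x] assms by (intro sum_le_suminf) (auto simp: sums_iff)
  then show ?thesis using exp_sums_div[of x] by (simp add: sums_iff)
qed

lemma exp_tail:
  fixes w :: complex and n :: nat
  assumes n: "n \<ge> 1" and wn: "cmod w \<le> n"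
  shows "cmod (exp w - (\<Sum>i=0..n. w^i / fact i)) \<le> (cmod w / n)^(Suc n) * exp n"
proof -
  define u where "u = cmod w"
  have u0: "u \<ge> 0" by (simp add: u_def)
  have set: "{0..n} = {..<Suc n}" by auto
  have s1: "(\<lambda>i. w^(i + Suc n) / fact (i + Suc n)) sums (exp w - (\<Sum>i=0..n. w^i / fact i))"
    using sums_split_initial_segment[OF exp_sums_div[of w], of "Suc n"] by (simp add: set)
  have s2: "(\<lambda>i. u^(i + Suc n) / fact (i + Suc n)) sums (exp u - (\<Sum>i=0..n. u^i / fact i))"
    using sums_split_initial_segment[OF exp_sums_div[of u], of "Suc n"] by (simp add: set)
  have s3: "(\<lambda>i. real n^(i + Suc n) / fact (i + Suc n)) sums (exp n - (\<Sum>i=0..n. real n^i / fact i))"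
    using sums_split_initial_segment[OF exp_sums_div[of "real n"], of "Suc n"] by (simp add: set)
  have nrm: "(\<lambda>i. cmod (w^(i + Suc n) / fact (i + Suc n))) = (\<lambda>i. u^(i + Suc n) / fact (i + Suc n))"
    by (rule ext) (simp only: norm_divide norm_power norm_fact u_def)
  have "cmod (exp w - (\<Sum>i=0..n. w^i / fact i)) = cmod (\<Sum>i. w^(i + Suc n) / fact (i + Suc n))"
    using s1 by (simp add: sums_iff)
  also have "\<dots> \<le> (\<Sum>i. u^(i + Suc n) / fact (i + Suc n))"
    using summable_norm[of "\<lambda>i. w^(i + Suc n) / fact (i + Suc n)"] s2 nrm by (simp add: sums_iff)
  also have "\<dots> \<le> (\<Sum>i. (u / n)^(Suc n) * (real n^(i + Suc n) / fact (i + Suc n)))"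
  proof (rule suminf_le)
    fix i
    have nn: "real n > 0" using n by simp
    have r1: "u / n \<le> 1" using wn nn by (simp add: u_def)
    have "u^(i + Suc n) = (u/n)^(i + Suc n) * real n ^ (i + Suc n)"
      using nn by (simp add: power_divide)
    also have "\<dots> \<le> (u/n)^(Suc n) * real n ^ (i + Suc n)"
      using r1 u0 nn by (intro mult_right_mono power_decreasing) auto
    finally show "u^(i + Suc n) / fact (i + Suc n) \<le> (u / n)^(Suc n) * (real n^(i + Suc n) / fact (i + Suc n))"
      by (simp add: divide_right_mono)
  next
    show "summable (\<lambda>i. u^(i + Suc n) / fact (i + Suc n))" using s2 by (simp add: sums_iff)
    show "summable (\<lambda>i. (u / n)^(Suc n) * (real n^(i + Suc n) / fact (i + Suc n)))"
      using s3 by (intro summable_mult) (simp add: sums_iff)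
  qed
  also have "\<dots> = (u / n)^(Suc n) * (exp n - (\<Sum>i=0..n. real n^i / fact i))"
    using sums_mult[OF s3, of "(u / n)^(Suc n)"] by (simp add: sums_iff)
  also have "\<dots> \<le> (u / n)^(Suc n) * exp n"
    using u0 by (intro mult_left_mono) (auto intro!: sum_nonneg)
  finally show ?thesis by (simp add: u_def)
qed

lemma partial_large:
  fixes U :: real and n :: nat
  assumes n: "n \<ge> 1" and U: "U \<ge> n / exp 2"
  shows "(\<Sum>i=0..n. U^i / fact i) \<le> (exp 3 * U / n)^n"
proof -
  have nn: "real n > 0" using n by simp
  define m where "m = exp 2 * U / n"
  have m1: "m \<ge> 1" using U nn by (simp add: m_def field_simps)
  have U0: "U \<ge> 0" using U nn by (smt (verit) divide_nonneg_pos exp_gt_zero)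
  have "(\<Sum>i=0..n. U^i / fact i) \<le> (\<Sum>i=0..n. m^n * (real n^i / fact i))"
  proof (rule sum_mono)
    fix i assume i: "i \<in> {0..n}"
    have "U^i = (U/n)^i * real n^i" using nn by (simp add: power_divide)
    also have "\<dots> \<le> m^n * real n^i"
    proof (intro mult_right_mono)
      have "1 * U \<le> exp 2 * U" by (rule mult_right_mono[OF _ U0]) simp
      then have "U / n \<le> exp 2 * U / n" using nn by (intro divide_right_mono) auto
      then have "U / n \<le> m" by (simp add: m_def)
      moreover have "U/n \<ge> 0" using U nn by (smt (verit) divide_nonneg_pos exp_gt_zero)
      ultimately have "(U/n)^i \<le> m^i" by (intro power_mono) auto
      also have "\<dots> \<le> m^n" using m1 i by (intro power_increasing) auto
      finally show "(U/n)^i \<le> m^n" .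
    qed simp
    finally have "U^i / fact i \<le> m^n * real n^i / fact i" by (rule divide_right_mono) simp
    then show "U^i / fact i \<le> m^n * (real n^i / fact i)" by simp
  qed
  also have "\<dots> = m^n * (\<Sum>i=0..n. real n^i / fact i)" by (simp add: sum_distrib_left)
  also have "\<dots> \<le> m^n * exp n" using m1 by (intro mult_left_mono partial_exp_le) auto
  also have "\<dots> = (exp 3 * U / n)^n"
  proof -
    have e1: "exp (real n) = exp 1 ^ n" using exp_of_nat_mult[of n "1::real"] by simp
    have e3: "exp 3 = exp 2 * exp (1::real)" by (simp add: exp_add[symmetric])
    have "m^n * exp n = (m * exp 1)^n" by (simp add: e1 power_mult_distrib)
    also have "m * exp 1 = exp 3 * U / n" by (simp add: m_def e3)
    finally show ?thesis .
  qed
  finally show ?thesis .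
qed



definition Ep :: "nat \<Rightarrow> complex \<Rightarrow> complex" where
  "Ep n w = (\<Sum>i=0..n. w^i / fact i)"

lemma Ep_norm_le:
  assumes "cmod w \<le> U"
  shows "cmod (Ep n w) \<le> (\<Sum>i=0..n. U^i / fact i)"
proof -
  have "cmod (Ep n w) \<le> (\<Sum>i=0..n. cmod (w^i / fact i))"
    unfolding Ep_def by (rule norm_sum)
  also have "\<dots> \<le> (\<Sum>i=0..n. U^i / fact i)"
  proof (rule sum_mono)
    fix i
    have "cmod w ^ i \<le> U ^ i" using assms by (intro power_mono) auto
    then show "cmod (w^i / fact i) \<le> U^i / fact i"
      by (simp add: norm_divide norm_power divide_right_mono del: of_nat_fact)
  qed
  finally show ?thesis .
qed

lemma exp3_le: "exp (3::real) \<le> 27"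
proof -
  have "exp (3::real) = exp 1 ^ 3" using exp_of_nat_mult[of 3 "1::real"] by simp
  also have "\<dots> \<le> 3 ^ 3" using exp_le by (intro power_mono) auto
  finally show ?thesis by simp
qed

lemma exp2_le: "exp (2::real) \<le> 9"
proof -
  have "exp (2::real) = exp 1 ^ 2" using exp_of_nat_mult[of 2 "1::real"] by simp
  also have "\<dots> \<le> 3 ^ 2" using exp_le by (intro power_mono) auto
  finally show ?thesis by simp
qed

lemma Ep_small:
  assumes n: "n \<ge> 1" and w: "cmod w \<le> n / exp 2"
  shows "cmod (Ep n w - exp w) \<le> exp (- (n/2)) * exp (Re w)"
proof -
  define u where "u = cmod w"
  have nn: "real n > 0" using n by simp
  have e2: "exp (2::real) \<ge> 2" using exp_ge_add_one_self[of "2::real"] by simp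
  have un: "u \<le> n / 2"
  proof -
    have "real n / exp 2 \<le> real n / 2" using e2 nn by (intro divide_left_mono) auto
    then show ?thesis using w unfolding u_def by linarith
  qed
  have u0: "u \<ge> 0" by (simp add: u_def)
  have wn: "cmod w \<le> n" using un u0 by (simp add: u_def)
  have "cmod (Ep n w - exp w) = cmod (exp w - Ep n w)" by (simp add: norm_minus_commute)
  also have "\<dots> \<le> (u / n)^(Suc n) * exp n" unfolding Ep_def u_def by (rule exp_tail[OF n wn])
  also have "\<dots> \<le> exp (-2) ^ Suc n * exp n"
  proof (intro mult_right_mono power_mono)
    have "u / n \<le> (n / exp 2) / n" using w nn by (intro divide_right_mono) (auto simp: u_def)
    also have "\<dots> = exp (-2)" using nn by (simp add: exp_minus field_simps)
    finally show "u / n \<le> exp (-2)" .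
  qed (use u0 nn in auto)
  also have "\<dots> = exp (- 2 * (n + 1) + n)"
    by (simp add: exp_add[symmetric] exp_of_nat_mult[symmetric] algebra_simps)
  also have "\<dots> \<le> exp (- (n/2) + (- u))" using un by simp
  also have "\<dots> \<le> exp (- (n/2)) * exp (Re w)"
  proof -
    have "- u \<le> Re w" unfolding u_def using abs_Re_le_cmod[of w] by linarith
    then show ?thesis by (simp add: exp_add[symmetric])
  qed
  finally show ?thesis .
qed

lemma Ep_small_bounds:
  assumes n: "n \<ge> 1" and w: "cmod w \<le> n / exp 2"
  shows "cmod (Ep n w) \<le> (1 + exp (- (n/2))) * exp (Re w)"
    and "cmod (Ep n w) \<ge> (1 - exp (- (n/2))) * exp (Re w)"
proof -
  have d: "cmod (Ep n w - exp w) \<le> exp (- (n/2)) * exp (Re w)" by (rule Ep_small[OF n w])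
  have "cmod (Ep n w) \<le> cmod (Ep n w - exp w) + cmod (exp w)"
    by (metis diff_add_cancel norm_triangle_ineq)
  then show "cmod (Ep n w) \<le> (1 + exp (- (n/2))) * exp (Re w)" using d by (simp add: algebra_simps)
  have "cmod (exp w) \<le> cmod (Ep n w - exp w) + cmod (Ep n w)"
    by (metis add.commute diff_add_cancel norm_minus_commute norm_triangle_ineq)
  then show "cmod (Ep n w) \<ge> (1 - exp (- (n/2))) * exp (Re w)" using d by (simp add: algebra_simps)
qed



lemma perj:
  fixes k P R :: real and n r :: nat and z :: complex
  assumes k: "k > 0" and n: "n \<ge> 1" and P: "P \<ge> 0" and R: "R \<ge> 0"
    and PR: "P*(k-1) + R*k = 2*k" and PRr: "P + R \<le> 2*r"
  shows "cmod (Ep n (of_real (k-1) * z)) powr P * cmod (Ep n (of_real k * z)) powr R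
     \<le> (1 + exp (- (n/2))) powr (P+R) / (1 - exp (- (n/2)))^2 *
        ((cmod (Ep n (of_real k * z)))^2 +
         (cmod ((of_real (64 * max 2 (k + 3/2)) * z / of_nat n)^n))^(2*r))"
proof -
  define c where "c = 64 * max 2 (k + 3/2)"
  define \<epsilon> where "\<epsilon> = exp (- (real n/2))"
  define m where "m = max 1 k"
  define ea where "ea = Ep n (of_real (k-1) * z)"
  define eb where "eb = Ep n (of_real k * z)"
  define Q where "Q = (cmod ((of_real c * z / of_nat n)^n))^(2*r)"
  define F where "F = (1 + \<epsilon>) powr (P+R) / (1 - \<epsilon>)^2"
  have nn: "real n > 0" using n by simp
  have e0: "\<epsilon> > 0" and e1: "\<epsilon> < 1" using nn by (auto simp: \<epsilon>_def)
  have m1: "m \<ge> 1" and mk: "k \<le> m" and mk1: "\<bar>k - 1\<bar> \<le> m" using k by (auto simp: m_def)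
  have cm: "c \<ge> 64 * m" by (auto simp: c_def m_def)
  have Q0: "Q \<ge> 0" by (simp add: Q_def)
  have Fpos: "F \<ge> 1"
  proof -
    have a: "(1 + \<epsilon>) powr (P+R) \<ge> 1" using e0 P R by (intro ge_one_powr_ge_zero) auto
    have b: "(1 - \<epsilon>)^2 \<le> 1" "(1 - \<epsilon>)^2 > 0" using e0 e1 by (auto simp: power_le_one)
    have "1 \<le> (1 + \<epsilon>) powr (P+R)" by (rule a)
    also have "\<dots> \<le> (1 + \<epsilon>) powr (P+R) / (1 - \<epsilon>)^2"
    proof -
      have "(1 + \<epsilon>) powr (P+R) * (1 - \<epsilon>)^2 \<le> (1 + \<epsilon>) powr (P+R) * 1"
        using a b by (intro mult_left_mono) auto
      then show ?thesis using b by (simp add: le_divide_eq)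
    qed
    finally show ?thesis by (simp add: F_def)
  qed
  have goal: "cmod ea powr P * cmod eb powr R \<le> F * ((cmod eb)^2 + Q)"
  proof (cases "cmod z \<le> n / (exp 2 * m)")
    case True
    define x where "x = Re z"
    have za: "cmod (of_real (k-1) * z) \<le> n / exp 2"
    proof -
      have "cmod (of_real (k-1) * z) = \<bar>k-1\<bar> * cmod z" by (simp only: norm_mult norm_of_real)
      also have "\<dots> \<le> m * cmod z" using mk1 by (intro mult_right_mono) auto
      also have "\<dots> \<le> m * (n / (exp 2 * m))" using True m1 by (intro mult_left_mono) auto
      also have "\<dots> = n / exp 2" using m1 by simp
      finally show ?thesis .
    qed
    have zb: "cmod (of_real k * z) \<le> n / exp 2"
    proof -
      have "cmod (of_real k * z) = \<bar>k\<bar> * cmod z" by (simp only: norm_mult norm_of_real)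
      also have "\<dots> \<le> m * cmod z" using mk k by (intro mult_right_mono) auto
      also have "\<dots> \<le> m * (n / (exp 2 * m))" using True m1 by (intro mult_left_mono) auto
      also have "\<dots> = n / exp 2" using m1 by simp
      finally show ?thesis .
    qed
    have ua: "cmod ea \<le> (1 + \<epsilon>) * exp ((k-1) * x)"
      using Ep_small_bounds(1)[OF n za] by (simp add: ea_def \<epsilon>_def x_def)
    have ub: "cmod eb \<le> (1 + \<epsilon>) * exp (k * x)"
      using Ep_small_bounds(1)[OF n zb] by (simp add: eb_def \<epsilon>_def x_def)
    have lb: "cmod eb \<ge> (1 - \<epsilon>) * exp (k * x)"
      using Ep_small_bounds(2)[OF n zb] by (simp add: eb_def \<epsilon>_def x_def)
    have "cmod ea powr P * cmod eb powr R \<le>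
          ((1 + \<epsilon>) * exp ((k-1) * x)) powr P * ((1 + \<epsilon>) * exp (k * x)) powr R"
      using ua ub P R by (intro mult_mono powr_mono2) auto
    also have "\<dots> = (1 + \<epsilon>) powr (P+R) * exp ((k-1) * x * P + k * x * R)"
      using e0 by (simp add: powr_mult exp_powr_real powr_add exp_add)
    also have "(k-1) * x * P + k * x * R = 2 * (k * x)"
    proof -
      have "(k-1) * x * P + k * x * R = x * (P*(k-1) + R*k)" by (simp add: algebra_simps)
      also have "\<dots> = x * (2 * k)" by (simp only: PR)
      finally show ?thesis by (simp add: mult_ac)
    qed
    also have "exp (2 * (k * x)) = (exp (k * x))^2"
      by (simp add: exp_of_nat_mult[symmetric])
    also have "(exp (k * x))^2 \<le> (cmod eb / (1 - \<epsilon>))^2"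
      using lb e1 by (intro power_mono) (auto simp: le_divide_eq mult.commute)
    also have "(1 + \<epsilon>) powr (P+R) * (cmod eb / (1 - \<epsilon>))^2 = F * (cmod eb)^2"
      by (simp add: F_def power_divide)
    also have "\<dots> \<le> F * ((cmod eb)^2 + Q)" using Fpos Q0 by (intro mult_left_mono) auto
    finally show ?thesis
      using e0 by (simp add: mult_left_mono)
  next
    case False
    define U where "U = m * cmod z"
    define y where "y = c * cmod z / n"
    have U: "U \<ge> n / exp 2"
    proof -
      have "n / exp 2 = m * (n / (exp 2 * m))" using m1 by simp
      also have "\<dots> \<le> m * cmod z" using False m1 by (intro mult_left_mono) auto
      finally show ?thesis by (simp add: U_def)
    qed
    have ey: "(exp 3 * U / n)^n \<le> y^n"
    proof (rule power_mono)
      have "exp 3 * m \<le> 27 * m" using exp3_le m1 by (intro mult_right_mono) auto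
      then have "exp 3 * m \<le> c" using cm m1 by linarith
      then have "exp 3 * m * cmod z \<le> c * cmod z" by (intro mult_right_mono) auto
      then show "exp 3 * U / n \<le> y" using nn by (simp add: U_def y_def divide_right_mono mult.assoc)
      show "0 \<le> exp 3 * U / n" using m1 by (simp add: U_def)
    qed
    have y1: "y \<ge> 1"
    proof -
      have "exp 2 * m \<le> 9 * m" using exp2_le m1 by (intro mult_right_mono) auto
      then have "exp 2 * m \<le> c" using cm m1 by linarith
      have pos: "exp 2 * m > 0" using m1 by simp
      have "real n / (exp 2 * m) < cmod z" using False by simp
      then have "real n < cmod z * (exp 2 * m)" using pos by (simp add: divide_less_eq)
      then have "real n \<le> exp 2 * m * cmod z" by (simp add: mult_ac)
      also have "\<dots> \<le> c * cmod z" using \<open>exp 2 * m \<le> c\<close> by (intro mult_right_mono) auto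
      finally show ?thesis using nn by (simp add: y_def le_divide_eq)
    qed
    have ba: "cmod ea \<le> y^n"
    proof -
      have "cmod (of_real (k-1) * z) \<le> U"
        using mk1 unfolding U_def norm_mult norm_of_real by (intro mult_right_mono) auto
      then have "cmod ea \<le> (\<Sum>i=0..n. U^i / fact i)" unfolding ea_def by (rule Ep_norm_le)
      also have "\<dots> \<le> (exp 3 * U / n)^n" by (rule partial_large[OF n U])
      finally show ?thesis using ey by simp
    qed
    have bb: "cmod eb \<le> y^n"
    proof -
      have "cmod (of_real k * z) \<le> U"
        using mk k unfolding U_def norm_mult norm_of_real by (intro mult_right_mono) auto
      then have "cmod eb \<le> (\<Sum>i=0..n. U^i / fact i)" unfolding eb_def by (rule Ep_norm_le)
      also have "\<dots> \<le> (exp 3 * U / n)^n" by (rule partial_large[OF n U])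
      finally show ?thesis using ey by simp
    qed
    have yn: "y^n \<ge> 1" using y1 by (simp add: one_le_power)
    have "cmod ea powr P * cmod eb powr R \<le> (y^n) powr P * (y^n) powr R"
      using ba bb P R by (intro mult_mono powr_mono2) auto
    also have "\<dots> = (y^n) powr (P+R)" by (simp add: powr_add)
    also have "\<dots> \<le> (y^n) powr (real (2*r))" using yn PRr by (intro powr_mono) auto
    also have "\<dots> = (y^n)^(2*r)" using yn by (intro powr_realpow) auto
    also have "\<dots> = Q"
    proof -
      have "cmod ((of_real c * z / of_nat n)^n) = y^n"
        using nn cm m1 by (simp add: y_def norm_power norm_divide norm_mult)
      then show ?thesis by (simp add: Q_def)
    qed
    also have "\<dots> \<le> 1 * ((cmod eb)^2 + Q)" by simp
    also have "\<dots> \<le> F * ((cmod eb)^2 + Q)" using Fpos Q0 by (intro mult_right_mono) auto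
    finally show ?thesis .
  qed
  then show ?thesis by (simp add: ea_def eb_def F_def Q_def \<epsilon>_def c_def)
qed



lemma sum_inj_le_suminf:
  fixes f :: "nat \<Rightarrow> real"
  assumes "finite A" "inj_on h A" "summable f" "\<And>i. f i \<ge> 0"
  shows "(\<Sum>j\<in>A. f (h j)) \<le> suminf f"
proof -
  have "(\<Sum>j\<in>A. f (h j)) = sum f (h ` A)" using assms(2) by (simp add: sum.reindex)
  also have "\<dots> \<le> suminf f" using assms by (intro sum_le_suminf) auto
  finally show ?thesis .
qed

lemma alpha_pos: "j \<ge> 1 \<Longrightarrow> ln (ln T) \<noteq> 0 \<Longrightarrow> alpha T j > 0"
  by (simp add: alpha_def)

lemma JJ_facts:
  fixes M T :: real
  assumes T: "T \<ge> exp (exp (max 1 (10 powr M)))"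
  shows "JJ T M \<ge> 2" and "ln (ln T) \<ge> 1"
    and "\<And>j. j \<in> {1..JJ T M} \<Longrightarrow> alpha T j * 20 ^ (JJ T M - j) \<le> 20 * 10 powr (-M)"
proof -
  define L where "L = ln (ln T)"
  define B where "B = 10 powr (-M)"
  have B0: "B > 0" by (simp add: B_def)
  have e1: "exp (max 1 (10 powr M)) > 0" by simp
  have lnT: "ln T \<ge> exp (max 1 (10 powr M))"
    using T by (metis exp_gt_zero exp_ln_iff ln_exp ln_le_cancel_iff order_less_le_trans)
  have L1: "L \<ge> max 1 (10 powr M)"
    using lnT unfolding L_def by (metis exp_gt_zero ln_exp ln_le_cancel_iff order_less_le_trans)
  then show "ln (ln T) \<ge> 1" by (simp add: L_def)
  have L0: "L > 0" using L1 by linarith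
  have LL: "L^2 \<ge> 10 powr M"
  proof -
    have "L \<le> L^2" using L1 by (simp add: power2_eq_square)
    then show ?thesis using L1 by linarith
  qed
  have al: "alpha T j = 20^(j-1) / L^2" if "j \<ge> 1" for j
    using that by (simp add: alpha_def L_def)
  define S where "S = {j. alpha T j \<le> 10 powr (-M)}"
  have oneS: "1 \<in> S"
  proof -
    have "1 / L^2 \<le> B"
    proof -
      have "1 / L^2 \<le> 1 / 10 powr M" using LL L0 by (intro divide_left_mono) auto
      then show ?thesis by (simp add: B_def powr_minus divide_inverse)
    qed
    then show ?thesis by (simp add: S_def al B_def)
  qed
  have finS: "finite S"
  proof (rule finite_subset)
    show "S \<subseteq> {..nat \<lceil>1 + L^2 * B\<rceil>}"
    proof
      fix j assume "j \<in> S"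
      then have jS: "alpha T j \<le> B" by (simp add: S_def B_def)
      show "j \<in> {..nat \<lceil>1 + L^2 * B\<rceil>}"
      proof (cases "j \<ge> 1")
        case True
        have "20^(j-1) / L^2 \<le> B" using jS al[OF True] by simp
        then have "20^(j-1) \<le> L^2 * B" using L0 by (simp add: divide_le_eq mult.commute)
        moreover have "real (j-1) \<le> 20^(j-1)"
        proof -
          have "j - 1 < 2^(j-1)" by (rule less_exp)
          then have "real (j-1) \<le> 2^(j-1)" by (metis less_imp_le of_nat_le_iff of_nat_numeral of_nat_power)
          also have "(2::real)^(j-1) \<le> 20^(j-1)" by (intro power_mono) auto
          finally show ?thesis .
        qed
        ultimately have "real j \<le> 1 + L^2 * B" using True by (simp add: of_nat_diff)
        then show ?thesis by (simp add: le_nat_iff ceiling_le_iff le_ceiling_iff)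
      qed simp
    qed
  qed simp
  have Sne: "S \<noteq> {}" using oneS by auto
  have MaxS: "Max S \<in> S" using finS Sne by (rule Max_in)
  have Max1: "Max S \<ge> 1" using finS oneS by (rule Max_ge)
  have J: "JJ T M = 1 + Max S" by (simp add: JJ_def S_def)
  show "JJ T M \<ge> 2" using J Max1 by simp
  fix j assume j: "j \<in> {1..JJ T M}"
  have aM: "20^(Max S - 1) / L^2 \<le> B" using MaxS al[OF Max1] by (simp add: S_def B_def)
  have "alpha T j * 20 ^ (JJ T M - j) = 20^(j-1) * 20^(JJ T M - j) / L^2"
    using j al[of j] by simp
  also have "20^(j-1) * 20^(JJ T M - j) = (20::real) * 20^(Max S - 1)"
  proof -
    have "(j - 1) + (JJ T M - j) = Suc (Max S - 1)" using j J Max1 by auto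
    then have "(20::real)^(j-1) * 20^(JJ T M - j) = 20^(Suc (Max S - 1))" by (simp add: power_add[symmetric])
    then show ?thesis by simp
  qed
  also have "20 * 20^(Max S - 1) / L^2 = 20 * (20^(Max S - 1) / L^2)" by simp
  also have "\<dots> \<le> 20 * B" using aM by simp
  finally show "alpha T j * 20 ^ (JJ T M - j) \<le> 20 * 10 powr (-M)" by (simp add: B_def)
qed



lemma pow20: "((20::real)^i) powr (3/4) \<ge> 1 + real i"
proof -
  define b where "b = (20::real) powr (3/4)"
  have eq: "((20::real)^i) powr (3/4) = b^i"
    by (simp add: b_def powr_realpow[symmetric] powr_powr powr_power mult.commute)
  have b4: "b^4 = 8000"
  proof -
    have "b^4 = 20 powr (real 4 * (3/4))" unfolding b_def by (rule powr_power) simp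
    also have "\<dots> = 20 powr (real 3)" by simp
    also have "\<dots> = 20^3" by (rule powr_realpow) simp
    finally show ?thesis by simp
  qed
  have b2: "b \<ge> 2"
  proof (rule ccontr)
    assume "\<not> 2 \<le> b"
    then have "b^4 < 2^4" by (intro power_strict_mono) (auto simp: b_def)
    then show False using b4 by simp
  qed
  then have "(2::real)^i \<le> b^i" by (intro power_mono) auto
  moreover have "1 + real i \<le> 2^i"
  proof -
    have "i < 2^i" by (rule less_exp)
    then have "Suc i \<le> 2^i" by (simp add: Suc_le_eq)
    then show ?thesis by (metis of_nat_Suc of_nat_le_iff of_nat_numeral of_nat_power add.commute)
  qed
  ultimately show ?thesis using eq by linarith
qed

lemma eps_sum:
  fixes k M T :: real
  assumes k: "k > 0" and T: "T \<ge> exp (exp (max 1 (10 powr M)))"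
  defines "c0 \<equiv> exp 2 * k * (20 * 10 powr (-M)) powr (-3/4)"
  defines "x \<equiv> exp (- (c0 / 2))"
  shows "\<And>j. j \<in> {1..JJ T M} \<Longrightarrow> nat \<lceil>ell k T j\<rceil> \<ge> 1"
    and "(\<Sum>j=1..JJ T M. exp (- (real (nat \<lceil>ell k T j\<rceil>) / 2))) \<le> (\<Sum>i. x^(Suc i))"
proof -
  define J where "J = JJ T M"
  define \<gamma> where "\<gamma> = 20 * 10 powr (-M)"
  have g0: "\<gamma> > 0" by (simp add: \<gamma>_def)
  have c0: "c0 > 0" using k by (simp add: c0_def)
  have L1: "ln (ln T) \<ge> 1" by (rule JJ_facts(2)[OF T])
  have key: "ell k T j \<ge> c0 * (1 + real (J - j))" if j: "j \<in> {1..J}" for j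
  proof -
    define i where "i = J - j"
    have apos: "alpha T j > 0" using j L1 by (intro alpha_pos) auto
    have "alpha T j * 20^i \<le> \<gamma>" using JJ_facts(3)[OF T, of j] j by (simp add: i_def J_def \<gamma>_def)
    then have a_le: "alpha T j \<le> \<gamma> / 20^i" by (simp add: le_divide_eq)
    have "(\<gamma> / 20^i) powr (-3/4) \<le> alpha T j powr (-3/4)"
      using a_le apos by (intro powr_mono2') auto
    moreover have "(\<gamma> / 20^i) powr (-3/4) = \<gamma> powr (-3/4) * ((20::real)^i) powr (3/4)"
    proof -
      have m: "(-3/4::real) = -(3/4)" by simp
      have "((20::real)^i) powr (-3/4) = inverse (((20::real)^i) powr (3/4))"
        unfolding m by (rule powr_minus)
      moreover have "(\<gamma> / 20^i) powr (-3/4) = \<gamma> powr (-3/4) / ((20::real)^i) powr (-3/4)"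
        by (rule powr_divide)
      ultimately show ?thesis by (simp only: divide_inverse inverse_inverse_eq)
    qed
    moreover have "\<gamma> powr (-3/4) * (1 + real i) \<le> \<gamma> powr (-3/4) * ((20::real)^i) powr (3/4)"
      using pow20[of i] by (intro mult_left_mono) auto
    ultimately have "\<gamma> powr (-3/4) * (1 + real i) \<le> alpha T j powr (-3/4)"
      by linarith
    then have "exp 2 * k * (\<gamma> powr (-3/4) * (1 + real i)) \<le> exp 2 * k * alpha T j powr (-3/4)"
      using k by (intro mult_left_mono) auto
    moreover have "c0 * (1 + real (J - j)) = exp 2 * k * (\<gamma> powr (-3/4) * (1 + real i))"
      unfolding c0_def \<gamma>_def i_def by (rule mult.assoc)
    ultimately show ?thesis unfolding ell_def by simp
  qed
  show "nat \<lceil>ell k T j\<rceil> \<ge> 1" if "j \<in> {1..JJ T M}" for j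
  proof -
    have "ell k T j \<ge> c0 * (1 + real (J - j))" using key that by (simp add: J_def)
    moreover have "c0 * (1 + real (J - j)) > 0" using c0 by simp
    ultimately show ?thesis by linarith
  qed
  have "(\<Sum>j=1..J. exp (- (real (nat \<lceil>ell k T j\<rceil>) / 2))) \<le> (\<Sum>j=1..J. x^(Suc (J - j)))"
  proof (rule sum_mono)
    fix j assume j: "j \<in> {1..J}"
    have "real (nat \<lceil>ell k T j\<rceil>) \<ge> ell k T j" by linarith
    then have "real (nat \<lceil>ell k T j\<rceil>) \<ge> c0 * (1 + real (J - j))" using key[OF j] by linarith
    then have cc: "real (nat \<lceil>ell k T j\<rceil>) \<ge> (1 + real (J - j)) * c0" by (metis mult.commute)
    then have "exp (- (real (nat \<lceil>ell k T j\<rceil>) / 2)) \<le> exp (real (Suc (J - j)) * (- (c0 / 2)))"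
    proof -
      have "real (Suc (J - j)) * (- (c0 / 2)) = - ((1 + real (J - j)) * c0) / 2"
        by (simp add: algebra_simps)
      moreover have "- (real (nat \<lceil>ell k T j\<rceil>) / 2) \<le> - ((1 + real (J - j)) * c0) / 2"
        using cc by linarith
      ultimately show ?thesis by simp
    qed
    also have "\<dots> = x^(Suc (J - j))" unfolding x_def by (rule exp_of_nat_mult)
    finally show "exp (- (real (nat \<lceil>ell k T j\<rceil>) / 2)) \<le> x^(Suc (J - j))" .
  qed
  also have "\<dots> \<le> (\<Sum>i. x^(Suc i))"
  proof (rule sum_inj_le_suminf[where f = "\<lambda>i. x^(Suc i)" and h = "\<lambda>j. J - j"])
    show "inj_on (\<lambda>j. J - j) {1..J}" by (auto simp: inj_on_def)
    have "x < 1" using c0 by (simp add: x_def)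
    moreover have "x > 0" by (simp add: x_def)
    ultimately show "summable (\<lambda>i. x^(Suc i))"
      using summable_mult[OF summable_geometric[of x], of x] by (simp add: mult.commute)
    show "\<And>i. 0 \<le> x ^ Suc i" by (simp add: x_def)
    show "finite {1..J}" by simp
  qed
  finally show "(\<Sum>j=1..JJ T M. exp (- (real (nat \<lceil>ell k T j\<rceil>) / 2))) \<le> (\<Sum>i. x^(Suc i))"
    by (simp add: J_def)
qed



lemma NNj_Ep: "NNj T k j s a = Ep (nat \<lceil>ell k T j\<rceil>) (of_real a * PP T j s)"
  by (simp add: NNj_def EE_def Ep_def)

lemma PP_cnj: "PP T j (cnj s) = cnj (PP T j s)"
proof -
  have "(of_nat p :: complex) powr (- cnj s) = cnj ((of_nat p :: complex) powr (- s))" for p :: nat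
    using cnj_powr[of "of_nat p :: complex" "- s"] by simp
  then show ?thesis by (simp add: PP_def)
qed

lemma Ep_cnj: "Ep n (cnj w) = cnj (Ep n w)"
  by (simp add: Ep_def)

lemma norm_NNj_cnj: "cmod (NNj T k j (cnj s) a) = cmod (NNj T k j s a)"
proof -
  have "NNj T k j (cnj s) a = cnj (NNj T k j s a)"
    by (simp add: NNj_Ep PP_cnj Ep_cnj[symmetric])
  then show ?thesis by simp
qed

lemma F_bound:
  fixes e S :: real
  assumes e0: "e > 0" and e1: "e \<le> exp (- (1/2))" and S: "S \<ge> 0"
  shows "(1 + e) powr S / (1 - e)^2 \<le> exp ((S + 6) * e)"
proof -
  have eh: "exp (1/2::real) \<ge> 3/2" using exp_ge_add_one_self[of "1/2::real"] by simp
  have e23: "e \<le> 2/3"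
  proof -
    have "exp (- (1/2::real)) = inverse (exp (1/2))" by (rule exp_minus)
    also have "\<dots> \<le> inverse (3/2)" using eh by (rule le_imp_inverse_le) simp
    finally show ?thesis using e1 by simp
  qed
  have a: "(1 + e) powr S \<le> exp (S * e)"
  proof -
    have "1 + e \<le> exp e" by (rule exp_ge_add_one_self)
    then have "(1 + e) powr S \<le> exp e powr S"
      using e0 S by (intro powr_mono2) auto
    also have "\<dots> = exp (e * S)" by (rule exp_powr_real)
    finally show ?thesis by (simp only: mult.commute)
  qed
  have b: "1 / (1 - e) \<le> exp (3 * e)"
  proof -
    have "e * (3 * e) \<le> 2/3 * (3 * e)" using e23 e0 by (intro mult_right_mono) auto
    then have "1 \<le> (1 - e) * (1 + 3 * e)" by (simp add: algebra_simps)
    then have "1 / (1 - e) \<le> 1 + 3 * e" using e23 by (subst divide_le_eq) (auto simp: mult_ac)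
    also have "\<dots> \<le> exp (3 * e)" by (rule exp_ge_add_one_self)
    finally show ?thesis .
  qed
  have b2: "1 / (1 - e)^2 \<le> exp (6 * e)"
  proof -
    have "1 / (1 - e)^2 = (1 / (1 - e))^2" by (simp add: power_divide)
    also have "\<dots> \<le> (exp (3 * e))^2" using b e23 by (intro power_mono) auto
    also have "(exp (3 * e))^2 = exp (2 * (3 * e))" using exp_of_nat_mult[of 2 "3 * e"] by simp
    finally show ?thesis by simp
  qed
  have "(1 + e) powr S / (1 - e)^2 = (1 + e) powr S * (1 / (1 - e)^2)" by simp
  also have "\<dots> \<le> exp (S * e) * exp (6 * e)"
    using a b2 by (intro mult_mono) auto
  also have "\<dots> = exp (S * e + 6 * e)" by (rule exp_add[symmetric])
  also have "S * e + 6 * e = (S + 6) * e" by (simp add: algebra_simps)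
  finally show ?thesis .
qed



lemma pointwise:
  fixes k M T P R :: real and \<rho> :: complex
  assumes k: "k > 0" and T: "T \<ge> exp (exp (max 1 (10 powr M)))"
    and P: "P \<ge> 0" and R: "R \<ge> 0" and PR: "P*(k-1) + R*k = 2*k"
    and PRr: "P + R \<le> 2 * real (rk k)"
  shows "cmod (NN T M k \<rho> (k-1)) powr P * cmod (NN T M k (cnj \<rho>) k) powr R \<le>
     exp ((P + R + 6) * (\<Sum>i. (exp (- ((exp 2 * k * (20 * 10 powr (-M)) powr (-3/4)) / 2)))^(Suc i)))
     * (\<Prod>i=1..JJ T M. (cmod (NNj T k i \<rho> k))^2 + (cmod (QQ T k i \<rho>))^(2 * rk k))"
proof -
  define J where "J = JJ T M"
  define x where "x = exp (- ((exp 2 * k * (20 * 10 powr (-M)) powr (-3/4)) / 2))"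
  define \<kappa> where "\<kappa> = P + R + 6"
  define n where "n j = nat \<lceil>ell k T j\<rceil>" for j
  define \<epsilon> where "\<epsilon> j = exp (- (real (n j) / 2))" for j
  define D where "D j = (cmod (NNj T k j \<rho> k))^2 + (cmod (QQ T k j \<rho>))^(2 * rk k)" for j
  define a where "a j = cmod (NNj T k j \<rho> (k-1)) powr P * cmod (NNj T k j (cnj \<rho>) k) powr R" for j
  have n1: "n j \<ge> 1" if "j \<in> {1..J}" for j
    using eps_sum(1)[OF k T, of j] that by (simp add: n_def J_def)
  have sumeps: "(\<Sum>j=1..J. \<epsilon> j) \<le> (\<Sum>i. x^(Suc i))"
    using eps_sum(2)[OF k T] by (simp add: \<epsilon>_def n_def J_def x_def)
  have D0: "D j \<ge> 0" for j by (simp add: D_def)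
  have aj: "a j \<le> exp (\<kappa> * \<epsilon> j) * D j" if j: "j \<in> {1..J}" for j
  proof -
    define z where "z = PP T j \<rho>"
    have nj: "n j \<ge> 1" by (rule n1[OF j])
    have ceil: "\<lceil>ell k T j\<rceil> = int (n j)" using nj unfolding n_def by linarith
    have Qeq: "cmod (QQ T k j \<rho>) = cmod ((of_real (64 * max 2 (k + 3/2)) * z / of_nat (n j))^(n j))"
      unfolding QQ_def ceil z_def n_def[symmetric] by simp
    have aeq: "a j = cmod (Ep (n j) (of_real (k-1) * z)) powr P * cmod (Ep (n j) (of_real k * z)) powr R"
      unfolding a_def norm_NNj_cnj by (simp add: NNj_Ep n_def z_def)
    have Deq: "D j = (cmod (Ep (n j) (of_real k * z)))^2 +
         (cmod ((of_real (64 * max 2 (k + 3/2)) * z / of_nat (n j))^(n j)))^(2 * rk k)"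
      by (simp add: D_def Qeq NNj_Ep n_def z_def)
    have "a j \<le> (1 + \<epsilon> j) powr (P+R) / (1 - \<epsilon> j)^2 * D j"
      unfolding aeq Deq \<epsilon>_def using perj[OF k nj P R PR] PRr by simp
    also have "\<dots> \<le> exp (\<kappa> * \<epsilon> j) * D j"
    proof (intro mult_right_mono D0)
      have "\<epsilon> j \<le> exp (- (1/2))" using nj by (simp add: \<epsilon>_def)
      then show "(1 + \<epsilon> j) powr (P+R) / (1 - \<epsilon> j)^2 \<le> exp (\<kappa> * \<epsilon> j)"
        using F_bound[of "\<epsilon> j" "P+R"] P R by (simp add: \<epsilon>_def \<kappa>_def)
    qed
    finally show ?thesis .
  qed
  have "cmod (NN T M k \<rho> (k-1)) powr P * cmod (NN T M k (cnj \<rho>) k) powr R = (\<Prod>j=1..J. a j)"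
    by (simp add: NN_def a_def J_def prod_norm[symmetric] prod_powr_distrib prod.distrib)
  also have "\<dots> \<le> (\<Prod>j=1..J. exp (\<kappa> * \<epsilon> j) * D j)"
    using aj by (intro prod_mono) (auto simp: a_def)
  also have "\<dots> = exp (\<kappa> * (\<Sum>j=1..J. \<epsilon> j)) * (\<Prod>j=1..J. D j)"
    by (simp add: prod.distrib exp_sum sum_distrib_left)
  also have "\<dots> \<le> exp (\<kappa> * (\<Sum>i. x^(Suc i))) * (\<Prod>j=1..J. D j)"
    using sumeps P R by (intro mult_right_mono prod_nonneg D0) (auto simp: \<kappa>_def)
  finally show ?thesis by (simp add: \<kappa>_def x_def D_def J_def)
qed



lemma powr2: "(x::real) \<ge> 0 \<Longrightarrow> x powr 2 = x^2"
  using powr_realpow'[of x 2] by simp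

lemma assemble_small:
  fixes Z :: "'a set" and w d u v Dt :: "'a \<Rightarrow> real" and k K :: real
  assumes k: "0 < k" "k \<le> 1/2" and K: "K > 0"
    and nn: "\<And>x. w x \<ge> 0" "\<And>x. d x \<ge> 0" "\<And>x. u x \<ge> 0" "\<And>x. v x \<ge> 0"
    and pw: "\<And>x. x \<in> Z \<Longrightarrow> u x powr 2 * v x powr (2/k) \<le> K * Dt x"
  shows "(\<Sum>x\<in>Z. w x * (d x * u x * v x)) \<le>
     K powr (k/2) * (\<Sum>x\<in>Z. w x * d x powr (2*k)) powr (1/2) *
       (\<Sum>x\<in>Z. w x * ((d x)^2 * (u x)^2)) powr ((1-k)/2) * (\<Sum>x\<in>Z. w x * Dt x) powr (k/2)"
proof (cases "finite Z")
  case False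
  then show ?thesis by simp
next
  case fin: True
  define f where "f x = d x powr k" for x
  define g where "g x = (d x * u x) powr (1-k)" for x
  define h where "h x = u x powr k * v x" for x
  define A where "A = (\<Sum>x\<in>Z. w x * d x powr (2*k))"
  define B where "B = (\<Sum>x\<in>Z. w x * ((d x)^2 * (u x)^2))"
  define X where "X = (\<Sum>x\<in>Z. w x * Dt x)"
  define Y where "Y = (\<Sum>x\<in>Z. w x * h x powr (2/k))"
  have f0: "f x \<ge> 0" and g0: "g x \<ge> 0" and h0: "h x \<ge> 0" for x
    using nn by (auto simp: f_def g_def h_def)
  have A0: "A \<ge> 0" unfolding A_def using nn by (intro sum_nonneg) auto
  have B0: "B \<ge> 0" unfolding B_def using nn by (intro sum_nonneg) auto
  have Y0: "Y \<ge> 0" unfolding Y_def using nn by (intro sum_nonneg) auto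
  have fac: "d x * u x * v x = f x * (g x * h x)" for x
  proof (cases "d x = 0 \<or> u x = 0")
    case True
    then show ?thesis using k by (auto simp: f_def g_def h_def)
  next
    case False
    then have dp: "d x > 0" and up: "u x > 0" using nn by (auto simp: less_le)
    have "f x * (g x * h x) = (d x powr k * d x powr (1-k)) * (u x powr (1-k) * u x powr k) * v x"
      using dp up by (simp add: f_def g_def h_def powr_mult mult_ac)
    also have "\<dots> = d x * u x * v x" using dp up by (simp add: powr_add[symmetric])
    finally show ?thesis by simp
  qed
  have step1: "(\<Sum>x\<in>Z. w x * (f x * (g x * h x))) \<le>
      (\<Sum>x\<in>Z. w x * f x powr 2) powr (1/2) * (\<Sum>x\<in>Z. w x * (g x * h x) powr 2) powr (1/2)"
    using holder_sum[OF fin, of w f "\<lambda>x. g x * h x" 2 2] nn f0 g0 h0 by simp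
  have eqA: "(\<Sum>x\<in>Z. w x * f x powr 2) = A"
    unfolding A_def f_def by (simp add: powr_powr mult.commute)
  have eqGH: "(\<Sum>x\<in>Z. w x * (g x * h x) powr 2) = (\<Sum>x\<in>Z. w x * (g x powr 2 * h x powr 2))"
    by (simp add: powr_mult g0 h0)
  have step2: "(\<Sum>x\<in>Z. w x * (g x powr 2 * h x powr 2)) \<le>
      (\<Sum>x\<in>Z. w x * (g x powr 2) powr (1/(1-k))) powr (1/(1/(1-k))) *
      (\<Sum>x\<in>Z. w x * (h x powr 2) powr (1/k)) powr (1/(1/k))"
    using k nn by (intro holder_sum[OF fin]) (auto simp: field_simps)
  have eqB: "(\<Sum>x\<in>Z. w x * (g x powr 2) powr (1/(1-k))) = B"
  proof -
    have "(g x powr 2) powr (1/(1-k)) = (d x)^2 * (u x)^2" for x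
    proof -
      have "(g x powr 2) powr (1/(1-k)) = (d x * u x) powr ((1-k) * 2 * (1/(1-k)))"
        by (simp add: g_def powr_powr)
      also have "(1-k) * 2 * (1/(1-k)) = 2" using k by (simp add: field_simps)
      finally show ?thesis using nn by (simp add: powr2 power_mult_distrib)
    qed
    then show ?thesis by (simp add: B_def)
  qed
  have eqY: "(\<Sum>x\<in>Z. w x * (h x powr 2) powr (1/k)) = Y"
    by (simp add: Y_def powr_powr)
  have YX: "Y \<le> K * X"
  proof -
    have "Y \<le> (\<Sum>x\<in>Z. w x * (K * Dt x))"
      unfolding Y_def
    proof (rule sum_mono)
      fix x assume x: "x \<in> Z"
      have "h x powr (2/k) = u x powr (k * (2/k)) * v x powr (2/k)"
        using nn by (simp add: h_def powr_mult powr_powr)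
      also have "k * (2/k) = 2" using k by simp
      finally have "h x powr (2/k) \<le> K * Dt x" using pw[OF x] by simp
      then show "w x * h x powr (2/k) \<le> w x * (K * Dt x)" using nn by (intro mult_left_mono) auto
    qed
    also have "\<dots> = K * X" by (simp add: X_def sum_distrib_left mult_ac)
    finally show ?thesis .
  qed
  have X0: "X \<ge> 0" using YX Y0 K by (smt (verit) zero_le_mult_iff)
  have "(\<Sum>x\<in>Z. w x * (d x * u x * v x)) = (\<Sum>x\<in>Z. w x * (f x * (g x * h x)))"
    by (simp add: fac)
  also have "\<dots> \<le> A powr (1/2) * (\<Sum>x\<in>Z. w x * (g x powr 2 * h x powr 2)) powr (1/2)"
    using step1 eqA eqGH by simp
  also have "\<dots> \<le> A powr (1/2) * (B powr (1-k) * Y powr k) powr (1/2)"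
  proof (intro mult_left_mono powr_mono2)
    show "(\<Sum>x\<in>Z. w x * (g x powr 2 * h x powr 2)) \<le> B powr (1-k) * Y powr k"
      using step2 eqB eqY k by simp
    show "0 \<le> (\<Sum>x\<in>Z. w x * (g x powr 2 * h x powr 2))" using nn by (intro sum_nonneg) auto
  qed simp_all
  also have "\<dots> \<le> A powr (1/2) * (B powr (1-k) * (K * X) powr k) powr (1/2)"
    using YX Y0 k by (intro mult_left_mono powr_mono2 mult_nonneg_nonneg) auto
  also have "\<dots> = K powr (k/2) * A powr (1/2) * B powr ((1-k)/2) * X powr (k/2)"
    using K X0 A0 B0 by (simp add: powr_mult powr_powr mult_ac)
  finally show ?thesis by (simp add: A_def B_def X_def)
qed

lemma assemble_large:
  fixes Z :: "'a set" and w d u v Dt :: "'a \<Rightarrow> real" and k K :: real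
  assumes k: "k > 1/2" and K: "K > 0"
    and nn: "\<And>x. w x \<ge> 0" "\<And>x. d x \<ge> 0" "\<And>x. u x \<ge> 0" "\<And>x. v x \<ge> 0"
    and pw: "\<And>x. x \<in> Z \<Longrightarrow> u x powr (2*k/(2*k-1)) * v x powr (2*k/(2*k-1)) \<le> K * Dt x"
  shows "(\<Sum>x\<in>Z. w x * (d x * u x * v x)) \<le>
     K powr ((2*k-1)/(2*k)) * (\<Sum>x\<in>Z. w x * d x powr (2*k)) powr (1/(2*k)) *
       (\<Sum>x\<in>Z. w x * Dt x) powr ((2*k-1)/(2*k))"
proof (cases "finite Z")
  case False
  then show ?thesis by simp
next
  case fin: True
  define q where "q = 2*k/(2*k-1)"
  have q1: "q > 1" using k by (simp add: q_def field_simps)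
  have pq: "1/(2*k) + 1/q = 1" using k by (simp add: q_def field_simps)
  have iq: "1/q = (2*k-1)/(2*k)" using k by (simp add: q_def)
  define A where "A = (\<Sum>x\<in>Z. w x * d x powr (2*k))"
  define X where "X = (\<Sum>x\<in>Z. w x * Dt x)"
  define Y where "Y = (\<Sum>x\<in>Z. w x * (u x * v x) powr q)"
  have Y0: "Y \<ge> 0" unfolding Y_def using nn by (intro sum_nonneg) auto
  have YX: "Y \<le> K * X"
  proof -
    have "Y \<le> (\<Sum>x\<in>Z. w x * (K * Dt x))"
      unfolding Y_def
    proof (rule sum_mono)
      fix x assume x: "x \<in> Z"
      have "(u x * v x) powr q \<le> K * Dt x" using pw[OF x] nn by (simp add: powr_mult q_def)
      then show "w x * (u x * v x) powr q \<le> w x * (K * Dt x)" using nn by (intro mult_left_mono) auto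
    qed
    also have "\<dots> = K * X" by (simp add: X_def sum_distrib_left mult_ac)
    finally show ?thesis .
  qed
  have X0: "X \<ge> 0" using YX Y0 K by (smt (verit) zero_le_mult_iff)
  have "(\<Sum>x\<in>Z. w x * (d x * u x * v x)) = (\<Sum>x\<in>Z. w x * (d x * (u x * v x)))"
    by (simp add: mult_ac)
  also have "\<dots> \<le> A powr (1/(2*k)) * Y powr (1/q)"
    unfolding A_def Y_def using holder_sum[OF fin, of w d "\<lambda>x. u x * v x" "2*k" q] nn q1 pq k
    by simp
  also have "\<dots> \<le> A powr (1/(2*k)) * (K * X) powr (1/q)"
    using YX Y0 q1 by (intro mult_left_mono powr_mono2) (auto simp: A_def intro!: sum_nonneg mult_nonneg_nonneg nn)
  also have "\<dots> = K powr ((2*k-1)/(2*k)) * A powr (1/(2*k)) * X powr ((2*k-1)/(2*k))"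
    using K X0 by (simp add: powr_mult iq mult_ac)
  finally show ?thesis by (simp add: A_def X_def)
qed



lemma zero_sum_norm:
  "norm (zero_sum T (\<lambda>\<rho>. deriv zeta \<rho> * NN T M k \<rho> (k - 1) * NN T M k (cnj \<rho>) k)) \<le>
   (\<Sum>\<rho>\<in>{\<rho>. zeta \<rho> = 0 \<and> 0 < Re \<rho> \<and> Re \<rho> < 1 \<and> 0 < Im \<rho> \<and> Im \<rho> \<le> T}.
      real (nat (zorder zeta \<rho>)) * (norm (deriv zeta \<rho>) * norm (NN T M k \<rho> (k - 1)) * norm (NN T M k (cnj \<rho>) k)))"
  unfolding zero_sum_def
  by (rule order_trans[OF norm_sum]) (simp add: norm_mult)

theorem lemma3p3:
  fixes k :: real
  assumes "RH" and "0 < k"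
  shows "\<exists>M0. \<forall>M\<ge>M0. \<exists>C>0. \<exists>T0. \<forall>T\<ge>T0.
    (let S = zero_sum T (\<lambda>\<rho>. deriv zeta \<rho> * NN T M k \<rho> (k - 1) * NN T M k (cnj \<rho>) k);
         A = zero_sum T (\<lambda>\<rho>. norm (deriv zeta \<rho>) powr (2 * k));
         B = zero_sum T (\<lambda>\<rho>. (norm (deriv zeta \<rho>))^2 * (norm (NN T M k \<rho> (k - 1)))^2);
         D = zero_sum T (\<lambda>\<rho>. \<Prod>i = 1..JJ T M.
                 (norm (NNj T k i \<rho> k))^2 + (norm (QQ T k i \<rho>))^(2 * rk k))
     in if k \<le> 1/2
        then norm S \<le> C * A powr (1/2) * B powr ((1 - k) / 2) * D powr (k / 2)
        else norm S \<le> C * A powr (1 / (2 * k)) * D powr ((2 * k - 1) / (2 * k)))"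
proof (rule exI[of _ 0], intro allI impI)
  fix M :: real
  have k: "k > 0" by (rule assms(2))
  define s where "s = (\<Sum>i. (exp (- ((exp 2 * k * (20 * 10 powr (-M)) powr (-3/4)) / 2)))^(Suc i))"
  define T0 where "T0 = exp (exp (max 1 (10 powr M)))"
  define Z where "Z T = {\<rho>. zeta \<rho> = 0 \<and> 0 < Re \<rho> \<and> Re \<rho> < 1 \<and> 0 < Im \<rho> \<and> Im \<rho> \<le> T}" for T
  define w where "w \<rho> = real (nat (zorder zeta \<rho>))" for \<rho>
  define d where "d \<rho> = norm (deriv zeta \<rho>)" for \<rho>
  define u where "u T \<rho> = norm (NN T M k \<rho> (k - 1))" for T \<rho>
  define v where "v T \<rho> = norm (NN T M k (cnj \<rho>) k)" for T \<rho>
  define Dt where "Dt T \<rho> = (\<Prod>i = 1..JJ T M. (norm (NNj T k i \<rho> k))^2 + (norm (QQ T k i \<rho>))^(2 * rk k))" for T \<rho>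
  have Seq: "norm (zero_sum T (\<lambda>\<rho>. deriv zeta \<rho> * NN T M k \<rho> (k - 1) * NN T M k (cnj \<rho>) k))
      \<le> (\<Sum>\<rho>\<in>Z T. w \<rho> * (d \<rho> * u T \<rho> * v T \<rho>))" for T
    using zero_sum_norm[of T M k] by (simp add: Z_def w_def d_def u_def v_def)
  have Aeq: "zero_sum T (\<lambda>\<rho>. norm (deriv zeta \<rho>) powr (2 * k)) = (\<Sum>\<rho>\<in>Z T. w \<rho> * d \<rho> powr (2*k))" for T
    by (simp add: zero_sum_def Z_def w_def d_def)
  have Beq: "zero_sum T (\<lambda>\<rho>. (norm (deriv zeta \<rho>))^2 * (norm (NN T M k \<rho> (k - 1)))^2)
      = (\<Sum>\<rho>\<in>Z T. w \<rho> * ((d \<rho>)^2 * (u T \<rho>)^2))" for T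
    by (simp add: zero_sum_def Z_def w_def d_def u_def)
  have Deq: "zero_sum T (\<lambda>\<rho>. \<Prod>i = 1..JJ T M.
                 (norm (NNj T k i \<rho> k))^2 + (norm (QQ T k i \<rho>))^(2 * rk k))
      = (\<Sum>\<rho>\<in>Z T. w \<rho> * Dt T \<rho>)" for T
    by (simp add: zero_sum_def Z_def w_def Dt_def)
  have nn: "w \<rho> \<ge> 0" "d \<rho> \<ge> 0" "u T \<rho> \<ge> 0" "v T \<rho> \<ge> 0" for T \<rho>
    by (auto simp: w_def d_def u_def v_def)
  show "\<exists>C>0. \<exists>T0. \<forall>T\<ge>T0.
    (let S = zero_sum T (\<lambda>\<rho>. deriv zeta \<rho> * NN T M k \<rho> (k - 1) * NN T M k (cnj \<rho>) k);
         A = zero_sum T (\<lambda>\<rho>. norm (deriv zeta \<rho>) powr (2 * k));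
         B = zero_sum T (\<lambda>\<rho>. (norm (deriv zeta \<rho>))^2 * (norm (NN T M k \<rho> (k - 1)))^2);
         D = zero_sum T (\<lambda>\<rho>. \<Prod>i = 1..JJ T M.
                 (norm (NNj T k i \<rho> k))^2 + (norm (QQ T k i \<rho>))^(2 * rk k))
     in if k \<le> 1/2
        then norm S \<le> C * A powr (1/2) * B powr ((1 - k) / 2) * D powr (k / 2)
        else norm S \<le> C * A powr (1 / (2 * k)) * D powr ((2 * k - 1) / (2 * k)))"
  proof (cases "k \<le> 1/2")
    case True
    define K where "K = exp ((2 + 2/k + 6) * s)"
    have K0: "K > 0" by (simp add: K_def)
    have H: "norm (zero_sum T (\<lambda>\<rho>. deriv zeta \<rho> * NN T M k \<rho> (k - 1) * NN T M k (cnj \<rho>) k)) \<le> K powr (k/2) * (zero_sum T (\<lambda>\<rho>. norm (deriv zeta \<rho>) powr (2 * k))) powr (1/2) * (zero_sum T (\<lambda>\<rho>. (norm (deriv zeta \<rho>))^2 * (norm (NN T M k \<rho> (k - 1)))^2)) powr ((1 - k) / 2) * (zero_sum T (\<lambda>\<rho>. \<Prod>i = 1..JJ T M.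
                 (norm (NNj T k i \<rho> k))^2 + (norm (QQ T k i \<rho>))^(2 * rk k))) powr (k / 2)"
      if T: "T \<ge> T0" for T
    proof -
      have pw: "u T \<rho> powr 2 * v T \<rho> powr (2/k) \<le> K * Dt T \<rho>" for \<rho>
      proof -
        have rk: "real (rk k) = 2 + real (nat \<lceil>1/k\<rceil>)" using True by (simp add: rk_def)
        have "1/k \<le> real (nat \<lceil>1/k\<rceil>)" by linarith
        then have PRr: "2 + 2/k \<le> 2 * real (rk k)" unfolding rk by simp
        have PR: "2*(k-1) + (2/k)*k = 2*k" using k by (simp add: field_simps)
        have T': "T \<ge> exp (exp (max 1 (10 powr M)))" using T by (simp add: T0_def)
        have "cmod (NN T M k \<rho> (k-1)) powr 2 * cmod (NN T M k (cnj \<rho>) k) powr (2/k) \<le>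
          exp ((2 + 2/k + 6) * (\<Sum>i. (exp (- ((exp 2 * k * (20 * 10 powr (-M)) powr (-3/4)) / 2)))^(Suc i)))
          * (\<Prod>i=1..JJ T M. (cmod (NNj T k i \<rho> k))^2 + (cmod (QQ T k i \<rho>))^(2 * rk k))"
          by (rule pointwise[OF k T' _ _ PR PRr]) (use k in auto)
        then show ?thesis by (simp only: u_def v_def Dt_def K_def s_def)
      qed
      have main: "(\<Sum>\<rho>\<in>Z T. w \<rho> * (d \<rho> * u T \<rho> * v T \<rho>)) \<le>
         K powr (k/2) * (\<Sum>\<rho>\<in>Z T. w \<rho> * d \<rho> powr (2*k)) powr (1/2) *
         (\<Sum>\<rho>\<in>Z T. w \<rho> * ((d \<rho>)^2 * (u T \<rho>)^2)) powr ((1-k)/2) * (\<Sum>\<rho>\<in>Z T. w \<rho> * Dt T \<rho>) powr (k/2)"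
        by (rule assemble_small[where Z="Z T" and u="u T" and v="v T" and Dt="Dt T"])
          (use k True K0 nn pw in auto)
      show ?thesis unfolding Aeq Beq Deq using Seq[of T] main by simp
    qed
    show ?thesis unfolding Let_def using True H K0
      by (intro exI[of _ "K powr (k/2)"] conjI exI[of _ T0]) auto
  next
    case False
    define q where "q = 2*k/(2*k-1)"
    define K where "K = exp ((q + q + 6) * s)"
    have K0: "K > 0" by (simp add: K_def)
    have k2: "k > 1/2" using False by simp
    have H: "norm (zero_sum T (\<lambda>\<rho>. deriv zeta \<rho> * NN T M k \<rho> (k - 1) * NN T M k (cnj \<rho>) k)) \<le> K powr ((2*k-1)/(2*k)) * (zero_sum T (\<lambda>\<rho>. norm (deriv zeta \<rho>) powr (2 * k))) powr (1 / (2 * k)) * (zero_sum T (\<lambda>\<rho>. \<Prod>i = 1..JJ T M.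
                 (norm (NNj T k i \<rho> k))^2 + (norm (QQ T k i \<rho>))^(2 * rk k))) powr ((2 * k - 1) / (2 * k))"
      if T: "T \<ge> T0" for T
    proof -
      have pw: "u T \<rho> powr (2*k/(2*k-1)) * v T \<rho> powr (2*k/(2*k-1)) \<le> K * Dt T \<rho>" for \<rho>
      proof -
        have rk: "real (rk k) = 1 + real (nat \<lceil>q\<rceil>)" using False by (simp add: rk_def q_def)
        have "q \<le> real (nat \<lceil>q\<rceil>)" by linarith
        then have PRr: "q + q \<le> 2 * real (rk k)" unfolding rk by simp
        have q2: "q*(2*k-1) = 2*k" using k2 by (simp add: q_def)
        have PR: "q*(k-1) + q*k = 2*k" using q2 by (simp add: algebra_simps)
        have q0: "q \<ge> 0" using k2 by (simp add: q_def)
        have T': "T \<ge> exp (exp (max 1 (10 powr M)))" using T by (simp add: T0_def)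
        have "cmod (NN T M k \<rho> (k-1)) powr q * cmod (NN T M k (cnj \<rho>) k) powr q \<le>
          exp ((q + q + 6) * (\<Sum>i. (exp (- ((exp 2 * k * (20 * 10 powr (-M)) powr (-3/4)) / 2)))^(Suc i)))
          * (\<Prod>i=1..JJ T M. (cmod (NNj T k i \<rho> k))^2 + (cmod (QQ T k i \<rho>))^(2 * rk k))"
          by (rule pointwise[OF k T' q0 q0 PR PRr])
        then show ?thesis by (simp only: u_def v_def Dt_def K_def s_def q_def)
      qed
      have main: "(\<Sum>\<rho>\<in>Z T. w \<rho> * (d \<rho> * u T \<rho> * v T \<rho>)) \<le>
         K powr ((2*k-1)/(2*k)) * (\<Sum>\<rho>\<in>Z T. w \<rho> * d \<rho> powr (2*k)) powr (1/(2*k)) *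
         (\<Sum>\<rho>\<in>Z T. w \<rho> * Dt T \<rho>) powr ((2*k-1)/(2*k))"
        by (rule assemble_large[where Z="Z T" and u="u T" and v="v T" and Dt="Dt T"])
          (use k2 K0 nn pw in auto)
      show ?thesis unfolding Aeq Deq using Seq[of T] main by simp
    qed
    show ?thesis unfolding Let_def using False H K0
      by (intro exI[of _ "K powr ((2*k-1)/(2*k))"] conjI exI[of _ T0]) auto
  qed
qed


end
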